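(* The dual problem $\min_{(\lambda,X)\in\mathcal C_F}F(\lambda,X)$ admits a unique solution $(\lambda^*,X^* )$. Equivalently, every minimizer $(\lambda,\Gamma,\Theta)$ of $\tilde J$ over $\mathcal C_0$ has the same $\lambda=\lambda^*$ and the same $\chi(\Theta)-\Gamma=X^*$.
   Context: Notation: $\mathbf Q_n$ real symmetric $n\times n$ matrices; $\chi:\mathbf Q_n\to\mathbf Q_n$ the orthogonal projection onto the zero-diagonal symmetric matrices (keeps off-diagonal entries, zeroes the diagonal); $|\cdot|$ the determinant. $\hat\Sigma\in\mathbf Q_n$, $\hat\Sigma\succ0$; $\delta_{max}:=\log|[\hat\Sigma^{-1}-\chi(\hat\Sigma^{-1})]\hat\Sigma|$, and $0<\delta<\delta_{max}$. Define $F(\lambda,X):=-\lambda\big[\log|\hat\Sigma^{-1}+\lambda^{-1}X|+\log|\hat\Sigma|-\delta\big]$, $$\mathcal C_F:=\{(\lambda,X):\ \lambda>0,\ X\in\mathbf Q_n,\ X\preceq I,\ \chi(X)-X\succeq0,\ \hat\Sigma^{-1}+\lambda^{-1}X\succ0\},$$ $$\tilde J(\lambda,\Gamma,\Theta):=\lambda\Big(-\log\big|\hat\Sigma^{-1}+\lambda^{-1}(\chi(\Theta)-\Gamma)\big|-\log|\hat\Sigma|+\delta\Big),$$ $$\mathcal C_0:=\{(\lambda,\Gamma,\Theta)\in\mathbb R\times\mathbf Q_n\times\mathbf Q_n:\ \lambda>0,\ I+\Gamma-\chi(\Theta)\succeq0,\ \Gamma\succeq0,\ \hat\Sigma^{-1}+\lambda^{-1}(\chi(\Theta)-\Gamma)\succ0\}.$$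 *)

theory Defs
  imports "HOL-Analysis.Analysis"
begin

definition symm_mat :: "real^'n^'n \<Rightarrow> bool" where
  "symm_mat A \<longleftrightarrow> transpose A = A"

definition psd :: "real^'n^'n \<Rightarrow> bool" where
  "psd A \<longleftrightarrow> symm_mat A \<and> (\<forall>x. 0 \<le> x \<bullet> (A *v x))"

definition pd :: "real^'n^'n \<Rightarrow> bool" where
  "pd A \<longleftrightarrow> symm_mat A \<and> (\<forall>x. x \<noteq> 0 \<longrightarrow> 0 < x \<bullet> (A *v x))"

text \<open>chi: keep off-diagonal entries, zero the diagonal.\<close>
definition offdiag :: "real^'n^'n \<Rightarrow> real^'n^'n" where
  "offdiag A = (\<chi> i j. if i = j then 0 else A $ i $ j)"

definition delta_max :: "real^'n^'n \<Rightarrow> real" where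
  "delta_max S = ln (det ((matrix_inv S - offdiag (matrix_inv S)) ** S))"

definition Fdual :: "real^'n^'n \<Rightarrow> real \<Rightarrow> real \<Rightarrow> real^'n^'n \<Rightarrow> real" where
  "Fdual S \<delta> lam X = - lam * (ln (det (matrix_inv S + inverse lam *\<^sub>R X)) + ln (det S) - \<delta>)"

definition C_F :: "real^'n^'n \<Rightarrow> (real \<times> (real^'n^'n)) set" where
  "C_F S = {(lam, X). lam > 0 \<and> symm_mat X \<and> psd (mat 1 - X) \<and> psd (offdiag X - X)
              \<and> pd (matrix_inv S + inverse lam *\<^sub>R X)}"

definition Jtilde :: "real^'n^'n \<Rightarrow> real \<Rightarrow> real \<Rightarrow> real^'n^'n \<Rightarrow> real^'n^'n \<Rightarrow> real" where
  "Jtilde S \<delta> lam \<Gamma> \<Theta> = lam * (- ln (det (matrix_inv S + inverse lam *\<^sub>R (offdiag \<Theta> - \<Gamma>)))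
                               - ln (det S) + \<delta>)"

definition C_0 :: "real^'n^'n \<Rightarrow> (real \<times> (real^'n^'n) \<times> (real^'n^'n)) set" where
  "C_0 S = {(lam, \<Gamma>, \<Theta>). lam > 0 \<and> symm_mat \<Gamma> \<and> symm_mat \<Theta>
              \<and> psd (mat 1 + \<Gamma> - offdiag \<Theta>) \<and> psd \<Gamma>
              \<and> pd (matrix_inv S + inverse lam *\<^sub>R (offdiag \<Theta> - \<Gamma>))}"

end

theory Submission
  imports Defs
begin


lemma symm_dot:
  fixes A :: "real^'n^'n"
  assumes "transpose A = A"
  shows "x \<bullet> (A *v y) = (A *v x) \<bullet> y"
proof -
  have "x v* A = A *v x" using vector_transpose_matrix[of x A] assms by simp
  then show ?thesis using dot_lmul_matrix[of x A y] by simp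
qed

lemma dim_real_vec: "DIM(real^'n) = CARD('n)"
  by simp

lemma span_ne_UNIV:
  fixes B :: "(real^'n) set"
  assumes "finite B" "card B < CARD('n)"
  shows "span B \<noteq> UNIV"
proof
  assume "span B = UNIV"
  then have "dim (UNIV :: (real^'n) set) \<le> card B"
    by (metis assms(1) dim_le_card dim_span order_refl)
  then show False using assms by simp
qed


lemma eigen_step:
  fixes A :: "real^'n^'n"
  assumes sym: "transpose A = A" and fin: "finite B" and cardB: "card B < CARD('n)"
    and ev: "\<forall>b\<in>B. \<exists>d. A *v b = d *\<^sub>R b"
  shows "\<exists>x. norm x = 1 \<and> (\<forall>b\<in>B. b \<bullet> x = 0) \<and> (\<exists>d. A *v x = d *\<^sub>R x)"
proof -
  define W where "W = {y::real^'n. \<forall>b\<in>B. b \<bullet> y = 0}"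
  define q where "q = (\<lambda>y::real^'n. y \<bullet> (A *v y))"
  obtain a where a: "a \<noteq> 0" "span B \<subseteq> {x. a \<bullet> x = 0}"
    using span_not_univ_subset_hyperplane[OF span_ne_UNIV[OF fin cardB]] by blast
  have aW: "a \<in> W" unfolding W_def using a(2) span_base by (fastforce simp: inner_commute)
  have Wadd: "u + v \<in> W" if "u \<in> W" "v \<in> W" for u v using that by (auto simp: W_def inner_add_right)
  have Wscale: "c *\<^sub>R u \<in> W" if "u \<in> W" for c u using that by (auto simp: W_def)
  have closedW: "closed W" unfolding W_def
    by (simp add: Collect_ball_eq closed_INT closed_hyperplane)
  define K where "K = W \<inter> sphere 0 1"
  have compK: "compact K" unfolding K_def by (metis closedW compact_Int_closed compact_sphere inf_commute)
  have "(1 / norm a) *\<^sub>R a \<in> K" unfolding K_def using a(1) Wscale[OF aW] by (simp add: norm_sgn)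
  then have Kne: "K \<noteq> {}" by blast
  have contq: "continuous_on K q" unfolding q_def
    by (intro continuous_intros linear_continuous_on matrix_vector_mul_linear)
  obtain x where xK: "x \<in> K" and xmax: "\<And>y. y \<in> K \<Longrightarrow> q y \<le> q x"
    using continuous_attains_sup[OF compK Kne contq] by blast
  have xW: "x \<in> W" and nx: "norm x = 1" using xK by (auto simp: K_def)
  define c where "c = q x"
  define r where "r = A *v x - c *\<^sub>R x"
  have rW0: "\<forall>b\<in>B. b \<bullet> r = 0"
  proof
    fix b assume bB: "b \<in> B"
    obtain d where d: "A *v b = d *\<^sub>R b" using ev bB by blast
    have "b \<bullet> (A *v x) = (A *v b) \<bullet> x" using symm_dot[OF sym] by blast
    also have "\<dots> = 0" using xW bB by (simp add: d W_def)
    finally show "b \<bullet> r = 0" using xW bB by (simp add: r_def W_def inner_diff_right)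
  qed
  then have rW: "r \<in> W" by (simp add: W_def)
  have xx: "x \<bullet> x = 1" using nx by (simp add: dot_square_norm)
  have xr: "x \<bullet> r = 0" by (simp add: r_def inner_diff_right c_def q_def xx)
  have rAx: "r \<bullet> (A *v x) = r \<bullet> r"
  proof -
    have "A *v x = r + c *\<^sub>R x" by (simp add: r_def)
    then show ?thesis using xr by (simp add: inner_add_right inner_commute)
  qed
  have key: "2 * t * (r \<bullet> r) + t^2 * (q r - c * (r \<bullet> r)) \<le> 0" for t
  proof -
    define z where "z = x + t *\<^sub>R r"
    have zW: "z \<in> W" unfolding z_def by (intro Wadd xW Wscale rW)
    have zz: "z \<bullet> z = 1 + t^2 * (r \<bullet> r)"
      using xr by (simp add: z_def inner_add_left inner_add_right xx inner_commute power2_eq_square)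
    then have zpos: "z \<bullet> z > 0" by (simp add: add_pos_nonneg)
    then have nz: "norm z > 0" by (simp add: inner_gt_zero_iff)
    have "(1 / norm z) *\<^sub>R z \<in> K" unfolding K_def using Wscale[OF zW] nz by simp
    then have "q ((1 / norm z) *\<^sub>R z) \<le> c" using xmax c_def by blast
    moreover have "q ((1 / norm z) *\<^sub>R z) = q z / (z \<bullet> z)"
    proof -
      have "q ((1 / norm z) *\<^sub>R z) = (1 / norm z) * (1 / norm z) * q z"
        by (simp add: q_def matrix_vector_mult_scaleR)
      also have "(1 / norm z) * (1 / norm z) = 1 / (z \<bullet> z)"
        by (simp add: dot_square_norm power2_eq_square)
      finally show ?thesis by simp
    qed
    ultimately have "q z \<le> c * (z \<bullet> z)" using zpos by (simp add: divide_le_eq)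
    moreover have "q z = c + 2 * t * (r \<bullet> r) + t^2 * q r"
    proof -
      have "q z = x \<bullet> (A *v x) + t * (x \<bullet> (A *v r)) + t * (r \<bullet> (A *v x)) + t * t * (r \<bullet> (A *v r))"
      proof -
        have "A *v z = A *v x + t *\<^sub>R (A *v r)"
          by (simp add: z_def matrix_vector_right_distrib matrix_vector_mult_scaleR)
        then have "q z = (x + t *\<^sub>R r) \<bullet> (A *v x + t *\<^sub>R (A *v r))" by (simp add: q_def z_def)
        also have "\<dots> = x \<bullet> (A *v x) + t * (x \<bullet> (A *v r)) + t * (r \<bullet> (A *v x)) + t * t * (r \<bullet> (A *v r))"
          by (simp add: inner_add_left inner_add_right distrib_left)
        finally show ?thesis .
      qed
      also have "x \<bullet> (A *v r) = r \<bullet> (A *v x)"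
        using symm_dot[OF sym, of x r] by (simp add: inner_commute)
      finally show ?thesis by (simp add: rAx c_def q_def power2_eq_square)
    qed
    ultimately show ?thesis using zz by (simp add: algebra_simps power2_eq_square)
  qed
  have "r \<bullet> r = 0"
  proof (rule ccontr)
    assume "r \<bullet> r \<noteq> 0"
    then have R: "r \<bullet> r > 0" by (simp add: inner_gt_zero_iff)
    define K0 where "K0 = \<bar>q r - c * (r \<bullet> r)\<bar>"
    define t where "t = (r \<bullet> r) / (K0 + 1)"
    have K0: "K0 \<ge> 0" by (simp add: K0_def)
    have t: "t > 0" using R K0 by (simp add: t_def)
    have "2 * t * (r \<bullet> r) \<le> t^2 * K0"
    proof -
      have "t^2 * (-(q r - c * (r \<bullet> r))) \<le> t^2 * K0"
        by (rule mult_left_mono) (auto simp: K0_def)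
      then show ?thesis using key[of t] by (simp add: algebra_simps)
    qed
    then have "2 * (r \<bullet> r) \<le> t * K0" using t by (simp add: power2_eq_square)
    also have "t * K0 < r \<bullet> r" using R K0 by (simp add: t_def field_simps)
    finally show False using R by simp
  qed
  then have "r = 0" by simp
  then have "A *v x = c *\<^sub>R x" by (simp add: r_def)
  moreover have "\<forall>b\<in>B. b \<bullet> x = 0" using xW by (simp add: W_def)
  ultimately show ?thesis using nx by blast
qed


definition diagm :: "('n \<Rightarrow> real) \<Rightarrow> real^'n^'n" where
  "diagm d = (\<chi> i j. if i = j then d i else 0)"

lemma orth_eigen_set:
  fixes A :: "real^'n^'n"
  assumes sym: "transpose A = A"
  shows "k \<le> CARD('n) \<Longrightarrow> \<exists>B. finite B \<and> card B = k \<and> (\<forall>b\<in>B. norm b = 1 \<and> (\<exists>d. A *v b = d *\<^sub>R b))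
            \<and> (\<forall>b\<in>B. \<forall>b'\<in>B. b \<noteq> b' \<longrightarrow> b \<bullet> b' = 0)"
proof (induction k)
  case 0
  show ?case by (intro exI[of _ "{}"]) auto
next
  case (Suc k)
  then obtain B where B: "finite B" "card B = k" "\<forall>b\<in>B. norm b = 1 \<and> (\<exists>d. A *v b = d *\<^sub>R b)"
      "\<forall>b\<in>B. \<forall>b'\<in>B. b \<noteq> b' \<longrightarrow> b \<bullet> b' = 0" by auto
  obtain x where x: "norm x = 1" "\<forall>b\<in>B. b \<bullet> x = 0" "\<exists>d. A *v x = d *\<^sub>R x"
    using eigen_step[OF sym B(1)] B Suc.prems by fastforce
  have xB: "x \<notin> B"
  proof
    assume "x \<in> B"
    then have "x \<bullet> x = 0" using x(2) by blast
    then show False using x(1) by simp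
  qed
  show ?case
  proof (intro exI[of _ "insert x B"] conjI)
    show "finite (insert x B)" using B by simp
    show "card (insert x B) = Suc k" using B xB by simp
    show "\<forall>b\<in>insert x B. norm b = 1 \<and> (\<exists>d. A *v b = d *\<^sub>R b)" using B x by auto
    show "\<forall>b\<in>insert x B. \<forall>b'\<in>insert x B. b \<noteq> b' \<longrightarrow> b \<bullet> b' = 0"
      using B(4) x(2) by (auto simp: inner_commute)
  qed
qed

lemma spectral:
  fixes A :: "real^'n^'n"
  assumes sym: "transpose A = A"
  shows "\<exists>(Q::real^'n^'n) d. transpose Q ** Q = mat 1 \<and> Q ** transpose Q = mat 1 \<and> A = Q ** diagm d ** transpose Q"
proof -
  obtain B where B: "finite B" "card B = CARD('n)" "\<forall>b\<in>B. norm b = 1 \<and> (\<exists>d. A *v b = d *\<^sub>R b)"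
      "\<forall>b\<in>B. \<forall>b'\<in>B. b \<noteq> b' \<longrightarrow> b \<bullet> b' = 0"
    using orth_eigen_set[OF sym, of "CARD('n)"] by auto
  obtain h where h: "bij_betw h (UNIV::'n set) B"
    using finite_same_card_bij[of "UNIV::'n set" B] B by auto
  have hB: "h i \<in> B" for i using h by (auto simp: bij_betw_def)
  have hinj: "h i = h j \<Longrightarrow> i = j" for i j using h by (auto simp: bij_betw_def inj_on_def)
  define d where "d i = (SOME d. A *v h i = d *\<^sub>R h i)" for i
  have hd: "A *v h i = d i *\<^sub>R h i" for i
    unfolding d_def by (rule someI_ex) (use B(3) hB in blast)
  have hdot: "h i \<bullet> h j = (if i = j then 1 else 0)" for i j
  proof (cases "i = j")
    case True
    have "norm (h i) = 1" using B(3) hB[of i] by blast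
    then show ?thesis using True by (simp add: dot_square_norm)
  next
    case False
    then have "h i \<noteq> h j" using hinj by blast
    then show ?thesis using B(4) hB[of i] hB[of j] False by simp
  qed
  define Q :: "real^'n^'n" where "Q = (\<chi> i j. h j $ i)"
  have QtQ: "transpose Q ** Q = mat 1"
    by (simp add: vec_eq_iff matrix_matrix_mult_def transpose_def Q_def mat_def
        hdot[symmetric] inner_vec_def)
  have QQt: "Q ** transpose Q = mat 1" by (fact matrix_left_right_inverse1[OF QtQ])
  have AQ: "A ** Q = Q ** diagm d"
  proof -
    have "(A ** Q) $ i $ j = (Q ** diagm d) $ i $ j" for i j
    proof -
      have "(A ** Q) $ i $ j = (A *v h j) $ i"
        by (simp add: matrix_matrix_mult_def matrix_vector_mult_def Q_def)
      also have "\<dots> = d j * h j $ i" by (simp add: hd)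
      also have "\<dots> = (Q ** diagm d) $ i $ j"
        by (simp add: matrix_matrix_mult_def diagm_def Q_def if_distrib if_distribR cong: if_cong)
      finally show ?thesis .
    qed
    then show ?thesis by (simp add: vec_eq_iff)
  qed
  have "A = A ** (Q ** transpose Q)" by (simp add: QQt)
  also have "\<dots> = Q ** diagm d ** transpose Q" by (simp add: matrix_mul_assoc AQ)
  finally have "A = Q ** diagm d ** transpose Q" .
  then show ?thesis using QtQ QQt by (intro exI[of _ Q] exI[of _ d]) simp
qed


lemma axis_nz: "(axis k (1::real)) \<noteq> 0" by (simp add: axis_def vec_eq_iff)

lemma dot_mat_left: "(x::real^'n) \<bullet> (M *v y) = (transpose M *v x) \<bullet> y"
  using dot_lmul_matrix[of x M y] by simp

lemma diagm_mult: "diagm f ** diagm g = diagm (\<lambda>k. f k * g k)"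
proof -
  have "(\<Sum>k\<in>UNIV. (if i = k then f i else 0) * (if k = j then g k else 0)) = (if i = j then f i * g i else 0)" for i j :: 'a
  proof -
    have "(\<Sum>k\<in>UNIV. (if i = k then f i else 0) * (if k = j then g k else 0)) = (\<Sum>k\<in>UNIV. if k = i then f i * (if k = j then g k else 0) else 0)"
      by (rule sum.cong, auto)
    also have "\<dots> = f i * (if i = j then g i else 0)" by simp
    finally show ?thesis by simp
  qed
  then show ?thesis by (simp add: vec_eq_iff matrix_matrix_mult_def diagm_def)
qed
lemma diagm_transpose[simp]: "transpose (diagm f) = diagm f"
  by (simp add: vec_eq_iff transpose_def diagm_def)

lemma diagm_one: "diagm (\<lambda>_. 1) = mat 1"
  by (simp add: vec_eq_iff diagm_def mat_def)

lemma diagm_vec: "(diagm f *v y) $ k = f k * y $ k"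
  by (simp add: matrix_vector_mult_def diagm_def if_distrib if_distribR cong: if_cong)

lemma det_diagm: "det (diagm f) = prod f UNIV"
  by (subst det_diagonal) (auto simp: diagm_def)

lemma cong_entry: "(M ** diagm f ** transpose M) $ i $ j = (\<Sum>k\<in>UNIV. M$i$k * f k * M$j$k)"
  by (simp add: matrix_matrix_mult_def diagm_def transpose_def if_distrib if_distribR cong: if_cong)

lemma cong_lin: "a *\<^sub>R (M ** diagm f ** transpose M) + b *\<^sub>R (M ** diagm g ** transpose M)
   = M ** diagm (\<lambda>k. a * f k + b * g k) ** transpose M"
  by (simp add: vec_eq_iff cong_entry sum_distrib_left sum.distrib[symmetric] algebra_simps)

lemma cong_diff: "(M ** diagm f ** transpose M) - (M ** diagm g ** transpose M)
   = M ** diagm (\<lambda>k. f k - g k) ** transpose M"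
  by (simp add: vec_eq_iff cong_entry sum_subtractf[symmetric] algebra_simps)

lemma cong_quad: "(x::real^'n) \<bullet> ((M ** diagm f ** transpose M) *v x) = (\<Sum>k\<in>UNIV. f k * ((transpose M *v x)$k)^2)"
proof -
  have "x \<bullet> ((M ** diagm f ** transpose M) *v x) = x \<bullet> (M *v (diagm f *v (transpose M *v x)))"
    by (simp only: matrix_vector_mul_assoc matrix_mul_assoc)
  also have "\<dots> = (transpose M *v x) \<bullet> (diagm f *v (transpose M *v x))" by (rule dot_mat_left)
  also have "\<dots> = (\<Sum>k\<in>UNIV. f k * ((transpose M *v x)$k)^2)"
    by (simp add: inner_vec_def diagm_vec power2_eq_square mult_ac)
  finally show ?thesis .
qed

lemma det_cong: "det (M ** diagm f ** transpose M) = det M ^ 2 * prod f UNIV"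
  by (simp add: det_mul det_transpose det_diagm power2_eq_square)

lemma cong_sym: "transpose (M ** diagm f ** transpose M) = M ** diagm f ** transpose M"
  by (simp add: matrix_transpose_mul matrix_mul_assoc)

lemma diag_from_quad:
  fixes M :: "real^'n^'n"
  assumes N: "transpose M ** N = mat 1" and that: "x = N *v axis k 1"
  shows "x \<bullet> ((M ** diagm f ** transpose M) *v x) = f k"
proof -
  have "transpose M *v x = axis k 1" using that N by (simp add: matrix_vector_mul_assoc)
  then show "x \<bullet> ((M ** diagm f ** transpose M) *v x) = f k"
    by (simp add: cong_quad axis_def power2_eq_square if_distrib if_distribR cong: if_cong)
qed

lemma pd_diag_pos:
  fixes M :: "real^'n^'n"
  assumes N: "transpose M ** N = mat 1"
    and pos: "\<And>x. x \<noteq> 0 \<Longrightarrow> 0 < x \<bullet> ((M ** diagm f ** transpose M) *v x)"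
  shows "f k > 0"
proof -
  define x where "x = N *v axis k 1"
  have "transpose M *v x = axis k 1" using N by (simp add: x_def matrix_vector_mul_assoc)
  then have "x \<noteq> 0" using axis_nz by force
  then have "0 < x \<bullet> ((M ** diagm f ** transpose M) *v x)" by (rule pos)
  also have "\<dots> = f k" using diag_from_quad[OF N, of x k f] x_def by simp
  finally show ?thesis .
qed

lemma psd_diag_nonneg:
  fixes M :: "real^'n^'n"
  assumes N: "transpose M ** N = mat 1"
    and pos: "\<And>x. 0 \<le> x \<bullet> ((M ** diagm f ** transpose M) *v x)"
  shows "f k \<ge> 0"
proof -
  define x where "x = N *v axis k 1"
  have "0 \<le> x \<bullet> ((M ** diagm f ** transpose M) *v x)" by (rule pos)
  also have "\<dots> = f k" using diag_from_quad[OF N, of x k f] x_def by simp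
  finally show ?thesis .
qed

lemma det_ne0_of_rinv:
  fixes M :: "real^'n^'n"
  assumes N: "transpose M ** N = mat 1"
  shows "det M \<noteq> 0"
proof
  assume "det M = 0"
  then have "det (transpose M ** N) = 0" by (simp add: det_mul det_transpose)
  then show False using N by simp
qed


lemma pd_sym: "pd A \<Longrightarrow> transpose A = A" by (simp add: pd_def symm_mat_def)
lemma psd_sym: "psd A \<Longrightarrow> transpose A = A" by (simp add: psd_def symm_mat_def)

lemma mul_cancel_r: "A ** B = mat 1 \<Longrightarrow> X ** A ** B = (X :: real^'n^'n)"
  by (metis matrix_mul_assoc matrix_mul_rid)

lemma factor:
  fixes A B :: "real^'n^'n"
  assumes pdA: "pd A" and symB: "transpose B = B"
  shows "\<exists>(M::real^'n^'n) (N::real^'n^'n) e. transpose M ** N = mat 1 \<and> A = M ** diagm (\<lambda>_. 1) ** transpose M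
                \<and> B = M ** diagm e ** transpose M"
proof -
  obtain Q :: "real^'n^'n" and d where Q: "transpose Q ** Q = mat 1" "Q ** transpose Q = mat 1"
      and Ad: "A = Q ** diagm d ** transpose Q"
    using spectral[OF pd_sym[OF pdA]] by blast
  have dpos: "d k > 0" for k
    by (rule pd_diag_pos[OF Q(1)]) (use pdA Ad in \<open>auto simp: pd_def\<close>)
  define L where "L = Q ** diagm (\<lambda>k. sqrt (d k))"
  define Li where "Li = diagm (\<lambda>k. 1 / sqrt (d k)) ** transpose Q"
  have sq: "(\<lambda>k. sqrt (d k) * sqrt (d k)) = d" using dpos by (simp add: fun_eq_iff less_imp_le)
  have dnz: "d k \<noteq> 0" for k using dpos[of k] by simp
  have sq1: "(\<lambda>k. sqrt (d k) * (1 / sqrt (d k))) = (\<lambda>_. 1)" by (simp add: fun_eq_iff dnz)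
  have sq2: "(\<lambda>k. (1 / sqrt (d k)) * sqrt (d k)) = (\<lambda>_. 1)" by (simp add: fun_eq_iff dnz)
  have LLt: "L ** transpose L = A"
  proof -
    have "L ** transpose L = Q ** (diagm (\<lambda>k. sqrt (d k)) ** diagm (\<lambda>k. sqrt (d k))) ** transpose Q"
      by (simp add: L_def matrix_transpose_mul matrix_mul_assoc)
    also have "\<dots> = A" by (simp only: diagm_mult sq Ad)
    finally show ?thesis .
  qed
  have LLi: "L ** Li = mat 1"
  proof -
    have "L ** Li = Q ** (diagm (\<lambda>k. sqrt (d k)) ** diagm (\<lambda>k. 1 / sqrt (d k))) ** transpose Q"
      by (simp add: L_def Li_def matrix_mul_assoc)
    also have "\<dots> = mat 1" by (simp only: diagm_mult sq1 diagm_one matrix_mul_rid Q(2))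
    finally show ?thesis .
  qed
  have LiL: "Li ** L = mat 1"
  proof -
    have "Li ** L = diagm (\<lambda>k. 1 / sqrt (d k)) ** (transpose Q ** Q) ** diagm (\<lambda>k. sqrt (d k))"
      by (simp add: L_def Li_def matrix_mul_assoc)
    also have "\<dots> = mat 1" by (simp only: Q(1) matrix_mul_rid diagm_mult sq2 diagm_one)
    finally show ?thesis .
  qed
  have LtLit: "transpose Li ** transpose L = mat 1"
    using LLi by (metis matrix_transpose_mul transpose_mat)
  have LitLt: "transpose L ** transpose Li = mat 1"
    using LiL by (metis matrix_transpose_mul transpose_mat)
  define C where "C = Li ** B ** transpose Li"
  have symC: "transpose C = C" by (simp add: C_def matrix_transpose_mul symB matrix_mul_assoc)
  obtain R :: "real^'n^'n" and e where R: "transpose R ** R = mat 1" "R ** transpose R = mat 1"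
      and Ce: "C = R ** diagm e ** transpose R"
    using spectral[OF symC] by blast
  define M where "M = L ** R"
  define N where "N = transpose Li ** R"
  have MN: "transpose M ** N = mat 1"
  proof -
    have "transpose M ** N = transpose R ** (transpose L ** transpose Li) ** R"
      by (simp add: M_def N_def matrix_transpose_mul matrix_mul_assoc)
    also have "\<dots> = mat 1" by (simp only: LitLt matrix_mul_rid R(1))
    finally show ?thesis .
  qed
  have MA: "A = M ** diagm (\<lambda>_. 1) ** transpose M"
  proof -
    have "M ** diagm (\<lambda>_. 1) ** transpose M = L ** (R ** transpose R) ** transpose L"
      by (simp add: M_def diagm_one matrix_transpose_mul matrix_mul_assoc)
    also have "\<dots> = A" by (simp only: R(2) matrix_mul_rid LLt)
    finally show ?thesis by simp
  qed
  have MB: "B = M ** diagm e ** transpose M"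
  proof -
    have "M ** diagm e ** transpose M = L ** (R ** diagm e ** transpose R) ** transpose L"
      by (simp add: M_def matrix_transpose_mul matrix_mul_assoc)
    also have "\<dots> = (L ** Li) ** B ** (transpose Li ** transpose L)"
      by (simp add: Ce[symmetric] C_def matrix_mul_assoc)
    also have "\<dots> = B" by (simp only: LLi LtLit matrix_mul_rid matrix_mul_lid)
    finally show ?thesis by simp
  qed
  show ?thesis using MN MA MB by blast
qed


lemma ln_strict: fixes x :: real assumes "x > 0" "x \<noteq> 1" shows "ln x < x - 1"
proof -
  have s: "sqrt x > 0" using assms by simp
  have "ln x = 2 * ln (sqrt x)" using assms by (simp add: ln_sqrt)
  also have "\<dots> \<le> 2 * (sqrt x - 1)" using ln_le_minus_one[OF s] by simp
  also have "\<dots> < x - 1"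
  proof -
    have "sqrt x \<noteq> 1" using assms by simp
    then have "(sqrt x - 1)^2 > 0" by simp
    moreover have "(sqrt x)^2 = x" using assms by simp
    ultimately show ?thesis by (simp add: power2_eq_square algebra_simps)
  qed
  finally show ?thesis .
qed

lemma scal_concave:
  fixes e t :: real
  assumes e: "e > 0" and t: "0 < t" "t < 1"
  shows "(1 - t) * ln e \<le> ln (t + (1 - t) * e)"
    and "e \<noteq> 1 \<Longrightarrow> (1 - t) * ln e < ln (t + (1 - t) * e)"
proof -
  define m where "m = t + (1 - t) * e"
  have "(1 - t) * e > 0" by (rule mult_pos_pos) (use e t in auto)
  then have m: "m > 0" using t by (simp add: m_def)
  have key: "t * ln (1 / m) + (1 - t) * ln (e / m) \<le> t * (1 / m - 1) + (1 - t) * (e / m - 1)"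
    using t by (intro add_mono mult_left_mono ln_le_minus_one) (use m e in auto)
  have rhs0: "t * (1 / m - 1) + (1 - t) * (e / m - 1) = 0"
    using m by (simp add: m_def field_simps)
  have lns: "t * ln (1 / m) + (1 - t) * ln (e / m) = (1 - t) * ln e - ln m"
    using m e by (simp add: ln_div algebra_simps)
  show "(1 - t) * ln e \<le> ln (t + (1 - t) * e)"
    using key rhs0 lns by (simp add: m_def)
  assume "e \<noteq> 1"
  then have "1 / m \<noteq> 1 \<or> e / m \<noteq> 1" using m by auto
  then have "t * ln (1 / m) + (1 - t) * ln (e / m) < t * (1 / m - 1) + (1 - t) * (e / m - 1)"
  proof
    assume "1 / m \<noteq> 1"
    then have "ln (1 / m) < 1 / m - 1" using m by (intro ln_strict) auto
    then have "t * ln (1 / m) < t * (1 / m - 1)" using t by simp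
    moreover have "(1 - t) * ln (e / m) \<le> (1 - t) * (e / m - 1)"
      using t m e by (intro mult_left_mono ln_le_minus_one) auto
    ultimately show ?thesis by linarith
  next
    assume "e / m \<noteq> 1"
    then have "ln (e / m) < e / m - 1" using m e by (intro ln_strict) auto
    then have "(1 - t) * ln (e / m) < (1 - t) * (e / m - 1)" using t by simp
    moreover have "t * ln (1 / m) \<le> t * (1 / m - 1)"
      using t m by (intro mult_left_mono ln_le_minus_one) auto
    ultimately show ?thesis by linarith
  qed
  then show "(1 - t) * ln e < ln (t + (1 - t) * e)"
    using rhs0 lns by (simp add: m_def)
qed

lemma pd_det_pos:
  fixes A :: "real^'n^'n"
  assumes "pd A" shows "det A > 0"
proof -
  obtain M N :: "real^'n^'n" where MN: "transpose M ** N = mat 1"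
      and A: "A = M ** diagm (\<lambda>_. 1) ** transpose M"
    using factor[OF assms pd_sym[OF assms]] by blast
  have "det M \<noteq> 0" by (rule det_ne0_of_rinv[OF MN])
  then show ?thesis by (simp add: A det_cong)
qed

lemma pd_comb:
  fixes A B :: "real^'n^'n"
  assumes "pd A" "pd B" "0 < t" "t < 1"
  shows "pd (t *\<^sub>R A + (1 - t) *\<^sub>R B)"
proof -
  have "symm_mat (t *\<^sub>R A + (1 - t) *\<^sub>R B)"
    using assms(1,2) by (simp add: pd_def symm_mat_def transpose_def vec_eq_iff)
  moreover have "0 < x \<bullet> ((t *\<^sub>R A + (1 - t) *\<^sub>R B) *v x)" if "x \<noteq> 0" for x
  proof -
    have "0 < x \<bullet> (A *v x)" "0 < x \<bullet> (B *v x)" using assms(1,2) that by (auto simp: pd_def)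
    then have "0 < t * (x \<bullet> (A *v x)) + (1 - t) * (x \<bullet> (B *v x))"
      using assms(3,4) by (intro add_pos_pos mult_pos_pos) auto
    then show ?thesis
      by (simp add: matrix_vector_mult_add_rdistrib scaleR_matrix_vector_assoc[symmetric] inner_add_right)
  qed
  ultimately show ?thesis by (simp add: pd_def)
qed


lemma logdet_concave:
  fixes A B :: "real^'n^'n"
  assumes pdA: "pd A" and pdB: "pd B" and t: "0 < t" "t < 1"
  shows "t * ln (det A) + (1 - t) * ln (det B) \<le> ln (det (t *\<^sub>R A + (1 - t) *\<^sub>R B))"
    and "A \<noteq> B \<Longrightarrow> t * ln (det A) + (1 - t) * ln (det B) < ln (det (t *\<^sub>R A + (1 - t) *\<^sub>R B))"
proof -
  obtain M N :: "real^'n^'n" and e where MN: "transpose M ** N = mat 1"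
      and A: "A = M ** diagm (\<lambda>_. 1) ** transpose M" and B: "B = M ** diagm e ** transpose M"
    using factor[OF pdA pd_sym[OF pdB]] by blast
  have epos: "e k > 0" for k
    by (rule pd_diag_pos[OF MN]) (use pdB B in \<open>auto simp: pd_def\<close>)
  define D where "D = det M ^ 2"
  have D: "D > 0" using det_ne0_of_rinv[OF MN] by (simp add: D_def)
  have dA: "det A = D" by (simp add: A det_cong D_def)
  have dB: "det B = D * prod e UNIV" by (simp add: B det_cong D_def)
  have comb: "t *\<^sub>R A + (1 - t) *\<^sub>R B = M ** diagm (\<lambda>k. t * 1 + (1 - t) * e k) ** transpose M"
    unfolding A B by (rule cong_lin)
  have dC: "det (t *\<^sub>R A + (1 - t) *\<^sub>R B) = D * prod (\<lambda>k. t + (1 - t) * e k) UNIV"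
    by (simp add: comb det_cong D_def)
  have pos2: "t + (1 - t) * e k > 0" for k
  proof -
    have "(1 - t) * e k > 0" by (rule mult_pos_pos) (use t epos in auto)
    then show ?thesis using t by simp
  qed
  have lnB: "ln (det B) = ln D + (\<Sum>k\<in>UNIV. ln (e k))"
    using D epos by (simp add: dB ln_mult ln_prod prod_pos less_imp_neq[symmetric])
  have lnC: "ln (det (t *\<^sub>R A + (1 - t) *\<^sub>R B)) = ln D + (\<Sum>k\<in>UNIV. ln (t + (1 - t) * e k))"
    using D pos2 by (simp add: dC ln_mult ln_prod prod_pos less_imp_neq[symmetric])
  have lhs: "t * ln (det A) + (1 - t) * ln (det B) = ln D + (\<Sum>k\<in>UNIV. (1 - t) * ln (e k))"
    by (simp add: dA lnB sum_distrib_left algebra_simps)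
  show "t * ln (det A) + (1 - t) * ln (det B) \<le> ln (det (t *\<^sub>R A + (1 - t) *\<^sub>R B))"
    unfolding lhs lnC using scal_concave(1)[OF epos t] by (simp add: sum_mono)
  assume AB: "A \<noteq> B"
  have "\<exists>k. e k \<noteq> 1"
  proof (rule ccontr)
    assume "\<not> (\<exists>k. e k \<noteq> 1)"
    then have "e = (\<lambda>_. 1)" by auto
    then show False using AB A B by simp
  qed
  then obtain k where k: "e k \<noteq> 1" by blast
  have "(\<Sum>k\<in>UNIV. (1 - t) * ln (e k)) < (\<Sum>k\<in>UNIV. ln (t + (1 - t) * e k))"
    by (rule sum_strict_mono_ex1) (use scal_concave[OF epos t] k in auto)
  then show "t * ln (det A) + (1 - t) * ln (det B) < ln (det (t *\<^sub>R A + (1 - t) *\<^sub>R B))"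
    unfolding lhs lnC by simp
qed

lemma det_mono:
  fixes A B :: "real^'n^'n"
  assumes pdA: "pd A" and symB: "transpose B = B" and ps: "psd (B - A)"
  shows "det A \<le> det B"
proof -
  obtain M N :: "real^'n^'n" and e where MN: "transpose M ** N = mat 1"
      and A: "A = M ** diagm (\<lambda>_. 1) ** transpose M" and B: "B = M ** diagm e ** transpose M"
    using factor[OF pdA symB] by blast
  have eq: "B - A = M ** diagm (\<lambda>k. e k - 1) ** transpose M" unfolding A B by (rule cong_diff)
  have ge: "e k - 1 \<ge> 0" for k
  proof (rule psd_diag_nonneg[OF MN])
    fix x
    show "0 \<le> x \<bullet> ((M ** diagm (\<lambda>k. e k - 1) ** transpose M) *v x)"
      using ps unfolding eq psd_def by blast
  qed
  have "1 \<le> prod e UNIV" by (rule prod_ge_1) (use ge in auto)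
  then have "det M ^ 2 * 1 \<le> det M ^ 2 * prod e UNIV" by (intro mult_left_mono) auto
  then show ?thesis by (simp add: A B det_cong)
qed


lemma psd_null:
  fixes P :: "real^'n^'n"
  assumes ps: "psd P" and x0: "x \<bullet> (P *v x) = 0"
  shows "P *v x = 0"
proof -
  have sym: "transpose P = P" using ps by (rule psd_sym)
  define y where "y = P *v x"
  define c where "c = y \<bullet> (P *v y)"
  have key: "0 \<le> 2 * t * (y \<bullet> y) + t^2 * c" for t
  proof -
    have "0 \<le> (x + t *\<^sub>R y) \<bullet> (P *v (x + t *\<^sub>R y))" using ps by (simp add: psd_def)
    also have "\<dots> = x \<bullet> (P *v x) + t * (x \<bullet> (P *v y)) + t * (y \<bullet> (P *v x)) + t * t * (y \<bullet> (P *v y))"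
      by (simp add: matrix_vector_right_distrib matrix_vector_mult_scaleR inner_add_left inner_add_right distrib_left)
    also have "x \<bullet> (P *v y) = y \<bullet> (P *v x)"
      using symm_dot[OF sym, of x y] by (simp add: inner_commute)
    also have "x \<bullet> (P *v x) = 0" by (rule x0)
    finally show ?thesis by (simp add: y_def[symmetric] c_def power2_eq_square)
  qed
  have "y \<bullet> y = 0"
  proof (rule ccontr)
    assume "y \<bullet> y \<noteq> 0"
    then have R: "y \<bullet> y > 0" by (simp add: inner_gt_zero_iff)
    define t where "t = - (y \<bullet> y) / (\<bar>c\<bar> + 1)"
    have t: "t < 0" using R by (simp add: t_def divide_neg_pos)
    have "0 \<le> 2 * t * (y \<bullet> y) + t^2 * c" by (rule key)
    also have "t^2 * c \<le> t^2 * \<bar>c\<bar>" by (intro mult_left_mono) auto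
    finally have "0 \<le> 2 * t * (y \<bullet> y) + t^2 * \<bar>c\<bar>" by simp
    then have "0 \<le> t * (2 * (y \<bullet> y) + t * \<bar>c\<bar>)" by (simp add: algebra_simps power2_eq_square)
    then have "2 * (y \<bullet> y) + t * \<bar>c\<bar> \<le> 0" using t by (simp add: zero_le_mult_iff)
    moreover have "t * \<bar>c\<bar> > - (y \<bullet> y)" using R by (simp add: t_def field_simps)
    ultimately show False using R by linarith
  qed
  then show ?thesis by (simp add: y_def)
qed

lemma psd_det_pd:
  fixes P :: "real^'n^'n"
  assumes ps: "psd P" and d: "det P \<noteq> 0"
  shows "pd P"
proof -
  have inj: "inj ((*v) P)" using d by (simp add: invertible_det_nz[symmetric] inj_matrix_vector_mult)
  have "0 < x \<bullet> (P *v x)" if "x \<noteq> 0" for x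
  proof -
    have ge: "0 \<le> x \<bullet> (P *v x)" using ps by (simp add: psd_def)
    have "x \<bullet> (P *v x) \<noteq> 0"
    proof
      assume "x \<bullet> (P *v x) = 0"
      then have "P *v x = P *v 0" using psd_null[OF ps] by simp
      then have "x = 0" using inj by (meson injD)
      then show False using that by simp
    qed
    then show ?thesis using ge by simp
  qed
  then show ?thesis using ps by (simp add: pd_def psd_def)
qed

lemma psd_comb:
  fixes A B :: "real^'n^'n"
  assumes "psd A" "psd B" "0 \<le> s" "0 \<le> r"
  shows "psd (s *\<^sub>R A + r *\<^sub>R B)"
proof -
  have "symm_mat (s *\<^sub>R A + r *\<^sub>R B)"
    using assms(1,2) by (simp add: psd_def symm_mat_def transpose_def vec_eq_iff)
  moreover have "0 \<le> x \<bullet> ((s *\<^sub>R A + r *\<^sub>R B) *v x)" for x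
  proof -
    have "0 \<le> x \<bullet> (A *v x)" "0 \<le> x \<bullet> (B *v x)" using assms(1,2) by (auto simp: psd_def)
    then have "0 \<le> s * (x \<bullet> (A *v x)) + r * (x \<bullet> (B *v x))"
      using assms(3,4) by simp
    then show ?thesis
      by (simp add: matrix_vector_mult_add_rdistrib scaleR_matrix_vector_assoc[symmetric] inner_add_right)
  qed
  ultimately show ?thesis by (simp add: psd_def)
qed

lemma axis_quad: "axis i 1 \<bullet> (M *v axis j (1::real)) = M $ i $ j"
  by (simp add: matrix_vector_mult_basis inner_axis' column_def)

lemma continuous_on_det[continuous_intros]:
  fixes f :: "'a::topological_space \<Rightarrow> real^'n^'n"
  assumes "continuous_on S f"
  shows "continuous_on S (\<lambda>z. det (f z))"
  unfolding det_def by (intro continuous_intros assms)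

lemma continuous_on_quad[continuous_intros]:
  fixes f :: "'a::topological_space \<Rightarrow> real^'n^'n"
  assumes "continuous_on S f"
  shows "continuous_on S (\<lambda>z. x \<bullet> (f z *v x))"
  unfolding inner_vec_def matrix_vector_mult_def by (intro continuous_intros assms)


lemma matrix_add_rdistrib': "(A + B) ** C = A ** C + B ** (C::real^'n^'n)"
  by (simp add: matrix_matrix_mult_def vec_eq_iff sum.distrib distrib_right)

lemma inv_S:
  fixes S :: "real^'n^'n"
  assumes "pd S"
  shows "S ** matrix_inv S = mat 1" "matrix_inv S ** S = mat 1"
proof -
  have "invertible S" using pd_det_pos[OF assms] by (simp add: invertible_det_nz)
  then have "\<exists>A'. S ** A' = mat 1 \<and> A' ** S = mat 1" by (simp add: invertible_def)
  then have "S ** matrix_inv S = mat 1 \<and> matrix_inv S ** S = mat 1"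
    unfolding matrix_inv_def by (rule someI_ex)
  then show "S ** matrix_inv S = mat 1" "matrix_inv S ** S = mat 1" by auto
qed

lemma inv_S_sym:
  fixes S :: "real^'n^'n"
  assumes "pd S"
  shows "transpose (matrix_inv S) = matrix_inv S"
proof -
  let ?Si = "matrix_inv S"
  have symS: "transpose S = S" using assms by (rule pd_sym)
  have "transpose ?Si ** S = mat 1"
    using inv_S(1)[OF assms] symS by (metis matrix_transpose_mul transpose_mat)
  then have "transpose ?Si = transpose ?Si ** (S ** ?Si)" using inv_S(1)[OF assms] by simp
  also have "\<dots> = ?Si" using \<open>transpose ?Si ** S = mat 1\<close> by (simp add: matrix_mul_assoc)
  finally show ?thesis .
qed

lemma inv_S_pd:
  fixes S :: "real^'n^'n"
  assumes "pd S"
  shows "pd (matrix_inv S)"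
proof -
  let ?Si = "matrix_inv S"
  have "0 < x \<bullet> (?Si *v x)" if "x \<noteq> 0" for x
  proof -
    define y where "y = ?Si *v x"
    have xy: "x = S *v y" using inv_S(1)[OF assms] by (simp add: y_def matrix_vector_mul_assoc)
    then have "y \<noteq> 0" using that by auto
    then have "0 < y \<bullet> (S *v y)" using assms by (simp add: pd_def)
    also have "y \<bullet> (S *v y) = y \<bullet> x" using xy by simp
    also have "\<dots> = x \<bullet> (?Si *v x)" by (simp add: y_def inner_commute)
    finally show ?thesis .
  qed
  then show ?thesis using inv_S_sym[OF assms] by (simp add: pd_def symm_mat_def)
qed

lemma offdiag_entry: "offdiag A $ i $ j = (if i = j then 0 else A $ i $ j)"
  by (simp add: offdiag_def)

lemma offdiag_add: "offdiag (A + B) = offdiag A + offdiag B"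
  by (simp add: vec_eq_iff offdiag_entry)
lemma offdiag_diff: "offdiag (A - B) = offdiag A - offdiag B"
  by (simp add: vec_eq_iff offdiag_entry)
lemma offdiag_scale: "offdiag (c *\<^sub>R A) = c *\<^sub>R offdiag A"
  by (simp add: vec_eq_iff offdiag_entry)
lemma offdiag_offdiag: "offdiag (offdiag A) = offdiag A"
  by (simp add: vec_eq_iff offdiag_entry)
lemma offdiag_sym: "transpose A = A \<Longrightarrow> transpose (offdiag A) = offdiag A"
  by (simp add: vec_eq_iff offdiag_entry transpose_def)

lemma diag_part: "A - offdiag A = diagm (\<lambda>i. A $ i $ i)"
  by (simp add: vec_eq_iff offdiag_entry diagm_def)

lemma psd_diag_entry: "psd A \<Longrightarrow> 0 \<le> A $ i $ i"
  using axis_quad[of i A i] by (simp add: psd_def) (metis)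

lemma pd_diag_entry: "pd A \<Longrightarrow> 0 < A $ i $ i"
proof -
  assume "pd A"
  moreover have "axis i (1::real) \<noteq> 0" by (rule axis_nz)
  ultimately have "0 < axis i 1 \<bullet> (A *v axis i 1)" by (simp add: pd_def)
  then show ?thesis by (simp add: axis_quad)
qed

lemma quad_diagm: "x \<bullet> (diagm f *v x) = (\<Sum>k\<in>UNIV. f k * (x $ k)^2)"
  by (simp add: inner_vec_def diagm_vec power2_eq_square mult_ac)

lemma psd_diagm: "(\<And>k. 0 \<le> f k) \<Longrightarrow> psd (diagm f)"
  by (simp add: psd_def symm_mat_def quad_diagm sum_nonneg)

lemma pd_diagm: "(\<And>k. 0 < f k) \<Longrightarrow> pd (diagm f)"
  by (rule psd_det_pd) (auto simp: psd_diagm less_imp_le det_diagm prod_pos less_imp_neq[symmetric])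

lemma quad_bound:
  fixes Om :: "real^'n^'n"
  shows "\<bar>x \<bullet> (Om *v x)\<bar> \<le> (\<Sum>i\<in>UNIV. \<Sum>j\<in>UNIV. \<bar>Om $ i $ j\<bar>) * (x \<bullet> x)"
proof -
  have "\<bar>x \<bullet> (Om *v x)\<bar> \<le> norm x * norm (Om *v x)" by (rule Cauchy_Schwarz_ineq2)
  also have "norm (Om *v x) \<le> onorm ((*v) Om) * norm x"
    by (rule onorm) (rule matrix_vector_mul_bounded_linear)
  also have "onorm ((*v) Om) \<le> (\<Sum>i\<in>UNIV. \<Sum>j\<in>UNIV. \<bar>Om $ i $ j\<bar>)"
    by (rule onorm_le_matrix_component_sum)
  finally show ?thesis
    by (simp add: dot_square_norm power2_eq_square mult_ac mult_left_mono mult_right_mono)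
qed

lemma psd_zero: "psd (0::real^'n^'n)"
  by (simp add: psd_def symm_mat_def transpose_def vec_eq_iff)


lemma witness:
  fixes S :: "real^'n^'n" and \<delta> :: real
  assumes pdS: "pd S" and dlt: "\<delta> < delta_max S"
  shows "\<exists>lam X. (lam, X) \<in> C_F S \<and> Fdual S \<delta> lam X < 0"
proof -
  let ?Si = "matrix_inv S"
  have pdSi: "pd ?Si" by (rule inv_S_pd[OF pdS])
  have symSi: "transpose ?Si = ?Si" by (rule inv_S_sym[OF pdS])
  define dd where "dd = (\<lambda>i. ?Si $ i $ i)"
  have ddpos: "dd i > 0" for i unfolding dd_def by (rule pd_diag_entry[OF pdSi])
  define Dg where "Dg = diagm dd"
  have Dg: "?Si - offdiag ?Si = Dg" by (simp add: Dg_def dd_def diag_part)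
  have pdDg: "pd Dg" unfolding Dg_def by (rule pd_diagm[OF ddpos])
  have dDg: "det Dg > 0" by (rule pd_det_pos[OF pdDg])
  have dS: "det S > 0" by (rule pd_det_pos[OF pdS])
  have dmax: "delta_max S = ln (det Dg) + ln (det S)"
    unfolding delta_max_def Dg using dDg dS by (simp add: det_mul ln_mult)
  define Om where "Om = offdiag ?Si"
  define cO where "cO = (\<Sum>i\<in>UNIV. \<Sum>j\<in>UNIV. \<bar>Om $ i $ j\<bar>)"
  have cO: "cO \<ge> 0" by (simp add: cO_def sum_nonneg)
  define lam where "lam = 1 / (cO + 1)"
  have lam: "lam > 0" using cO by (simp add: lam_def)
  have lamc: "lam * cO \<le> 1" using cO by (simp add: lam_def field_simps)
  define X where "X = (- lam) *\<^sub>R Om"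
  have symOm: "transpose Om = Om" unfolding Om_def by (rule offdiag_sym[OF symSi])
  have symX: "symm_mat X" using symOm
    by (simp add: symm_mat_def X_def vec_eq_iff transpose_def)
  have P: "?Si + inverse lam *\<^sub>R X = Dg"
    using lam Dg by (simp add: X_def Om_def)
  have psd1: "psd (mat 1 - X)"
  proof -
    have "transpose (mat 1 - X) = mat 1 - X"
      using symX by (simp add: symm_mat_def transpose_def vec_eq_iff mat_def)
    moreover have "0 \<le> x \<bullet> ((mat 1 - X) *v x)" for x
    proof -
      have "\<bar>x \<bullet> (Om *v x)\<bar> \<le> cO * (x \<bullet> x)" unfolding cO_def by (rule quad_bound)
      then have "lam * \<bar>x \<bullet> (Om *v x)\<bar> \<le> lam * (cO * (x \<bullet> x))" using lam by simp
      also have "\<dots> = (lam * cO) * (x \<bullet> x)" by simp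
      also have "\<dots> \<le> 1 * (x \<bullet> x)" by (rule mult_right_mono) (use lamc in auto)
      finally have f1: "lam * \<bar>x \<bullet> (Om *v x)\<bar> \<le> x \<bullet> x" by simp
      have "lam * (- (x \<bullet> (Om *v x))) \<le> lam * \<bar>x \<bullet> (Om *v x)\<bar>"
        by (rule mult_left_mono) (use lam in auto)
      then have "- (lam * (x \<bullet> (Om *v x))) \<le> x \<bullet> x" using f1 by simp
      moreover have "x \<bullet> ((mat 1 - X) *v x) = x \<bullet> x + lam * (x \<bullet> (Om *v x))"
        by (simp add: X_def matrix_vector_mult_add_rdistrib inner_add_right
            scaleR_matrix_vector_assoc[symmetric])
      ultimately show ?thesis by simp
    qed
    ultimately show ?thesis by (simp add: psd_def symm_mat_def)
  qed
  have psd2: "psd (offdiag X - X)"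
  proof -
    have "offdiag X = X" by (simp add: X_def Om_def vec_eq_iff offdiag_entry)
    then show ?thesis by (simp add: psd_zero)
  qed
  have inC: "(lam, X) \<in> C_F S"
    unfolding C_F_def using lam symX psd1 psd2 pdDg P by simp
  have "Fdual S \<delta> lam X = - lam * (delta_max S - \<delta>)"
    unfolding Fdual_def P dmax by simp
  also have "\<dots> < 0" using lam dlt by (simp add: mult_pos_pos)
  finally show ?thesis using inC by blast
qed


lemma spec_S:
  fixes S :: "real^'n^'n"
  assumes pdS: "pd S"
  shows "\<exists>s::'n\<Rightarrow>real. (\<forall>k. s k > 0) \<and> (\<forall>c. det (matrix_inv S + c *\<^sub>R mat 1) * det S = prod (\<lambda>k. 1 + c * s k) UNIV)"
proof -
  obtain Q :: "real^'n^'n" and s where Q: "transpose Q ** Q = mat 1" "Q ** transpose Q = mat 1"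
      and Sd: "S = Q ** diagm s ** transpose Q"
    using spectral[OF pd_sym[OF pdS]] by blast
  have spos: "s k > 0" for k
    by (rule pd_diag_pos[OF Q(1)]) (use pdS Sd in \<open>auto simp: pd_def\<close>)
  have dQ: "det Q ^ 2 = 1"
  proof -
    have "det (transpose Q ** Q) = 1" using Q(1) by simp
    then show ?thesis by (simp add: det_mul det_transpose power2_eq_square)
  qed
  have I: "mat 1 = Q ** diagm (\<lambda>_. 1) ** transpose Q" by (simp add: diagm_one Q(2))
  have H: "\<forall>c. det (matrix_inv S + c *\<^sub>R mat 1) * det S = prod (\<lambda>k. 1 + c * s k) UNIV"
  proof
    fix c
    have "(matrix_inv S + c *\<^sub>R mat 1) ** S = mat 1 + c *\<^sub>R S"
      by (simp add: matrix_add_rdistrib' inv_S(2)[OF pdS] scalar_matrix_assoc[symmetric])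
    also have "\<dots> = 1 *\<^sub>R (Q ** diagm (\<lambda>_. 1) ** transpose Q) + c *\<^sub>R (Q ** diagm s ** transpose Q)"
      using I Sd by simp
    also have "\<dots> = Q ** diagm (\<lambda>k. 1 * 1 + c * s k) ** transpose Q" by (rule cong_lin)
    finally have "(matrix_inv S + c *\<^sub>R mat 1) ** S = Q ** diagm (\<lambda>k. 1 + c * s k) ** transpose Q" by simp
    then have "det ((matrix_inv S + c *\<^sub>R mat 1) ** S) = prod (\<lambda>k. 1 + c * s k) UNIV"
      by (simp add: det_cong dQ)
    then show "det (matrix_inv S + c *\<^sub>R mat 1) * det S = prod (\<lambda>k. 1 + c * s k) UNIV" by (simp add: det_mul)
  qed
  show ?thesis by (rule exI[where x=s]) (use spos H in simp)
qed

lemma ln1p_sqrt: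
  fixes u :: real
  assumes "u \<ge> 0"
  shows "ln (1 + u) \<le> 2 * sqrt u"
proof -
  have p: "sqrt (1 + u) > 0" using assms by simp
  have "ln (1 + u) = 2 * ln (sqrt (1 + u))" using assms by (simp add: ln_sqrt)
  also have "\<dots> \<le> 2 * (sqrt (1 + u) - 1)" using ln_le_minus_one[OF p] by simp
  also have "sqrt (1 + u) \<le> sqrt 1 + sqrt u" by (rule sqrt_add_le_add_sqrt) (use assms in auto)
  finally show ?thesis by simp
qed

lemma G_bounds:
  fixes lam s :: real
  assumes lam: "lam > 0" and s: "s > 0"
  shows "lam * ln (1 + inverse lam * s) \<le> s"
    and "lam * ln (1 + inverse lam * s) \<le> 2 * sqrt (lam * s)"
proof -
  have u: "inverse lam * s \<ge> 0" using lam s by simp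
  have "lam * ln (1 + inverse lam * s) \<le> lam * (inverse lam * s)"
    by (rule mult_left_mono) (use ln_add_one_self_le_self[OF u] lam in auto)
  also have "lam * (inverse lam * s) = s" using lam by simp
  finally show "lam * ln (1 + inverse lam * s) \<le> s" .
  have "lam * ln (1 + inverse lam * s) \<le> lam * (2 * sqrt (inverse lam * s))"
    by (rule mult_left_mono) (use ln1p_sqrt[OF u] lam in auto)
  also have "lam * (2 * sqrt (inverse lam * s)) = 2 * sqrt (lam * s)"
  proof -
    have "sqrt (lam * s) = sqrt (lam^2 * (inverse lam * s))" using lam by (simp add: power2_eq_square)
    also have "\<dots> = lam * sqrt (inverse lam * s)" using lam by (simp add: real_sqrt_mult)
    finally show ?thesis by simp
  qed
  finally show "lam * ln (1 + inverse lam * s) \<le> 2 * sqrt (lam * s)" .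
qed

lemma F_lower:
  fixes S :: "real^'n^'n"
  assumes pdS: "pd S" and inC: "(lam, X) \<in> C_F S"
    and s: "\<forall>k::'n. s k > 0"
    and sdet: "\<forall>c. det (matrix_inv S + c *\<^sub>R mat 1) * det S = prod (\<lambda>k. 1 + c * s k) UNIV"
  shows "Fdual S \<delta> lam X \<ge> lam * \<delta> - (\<Sum>k\<in>UNIV. lam * ln (1 + inverse lam * s k))"
proof -
  let ?Si = "matrix_inv S"
  define P where "P = ?Si + inverse lam *\<^sub>R X"
  define R where "R = ?Si + inverse lam *\<^sub>R mat 1"
  have lam: "lam > 0" and pdP: "pd P" and ps1: "psd (mat 1 - X)"
    using inC by (auto simp: C_F_def P_def)
  have "R - P = inverse lam *\<^sub>R (mat 1 - X)" by (simp add: R_def P_def algebra_simps)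
  moreover have "psd (inverse lam *\<^sub>R (mat 1 - X) + 0 *\<^sub>R (mat 1 - X))"
    by (rule psd_comb[OF ps1 ps1]) (use lam in auto)
  ultimately have psRP: "psd (R - P)" by simp
  have symR: "transpose R = R"
    using inv_S_sym[OF pdS] by (simp add: R_def vec_eq_iff transpose_def mat_def)
  have dPR: "det P \<le> det R" by (rule det_mono[OF pdP symR psRP])
  have dP: "det P > 0" by (rule pd_det_pos[OF pdP])
  have dS: "det S > 0" by (rule pd_det_pos[OF pdS])
  have pos: "1 + inverse lam * s k > 0" for k using lam s by (simp add: add_pos_nonneg less_imp_le)
  have "ln (det P) + ln (det S) = ln (det P * det S)" using dP dS by (simp add: ln_mult)
  also have "\<dots> \<le> ln (det R * det S)" using dP dS dPR by (simp add: mult_right_mono)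
  also have "det R * det S = prod (\<lambda>k. 1 + inverse lam * s k) UNIV" using sdet by (simp add: R_def)
  also have "ln \<dots> = (\<Sum>k\<in>UNIV. ln (1 + inverse lam * s k))"
    by (rule ln_prod) (use pos in \<open>auto simp: less_imp_neq[symmetric]\<close>)
  finally have fin: "ln (det P) + ln (det S) \<le> (\<Sum>k\<in>UNIV. ln (1 + inverse lam * s k))" .
  have ineq: "- lam * (ln (det P) + ln (det S) - \<delta>) \<ge> - lam * ((\<Sum>k\<in>UNIV. ln (1 + inverse lam * s k)) - \<delta>)"
    by (rule mult_left_mono_neg) (use fin lam in auto)
  have A: "Fdual S \<delta> lam X = - lam * (ln (det P) + ln (det S) - \<delta>)" by (simp add: Fdual_def P_def)
  have B: "(\<Sum>k\<in>UNIV. lam * ln (1 + inverse lam * s k)) = lam * (\<Sum>k\<in>UNIV. ln (1 + inverse lam * s k))"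
    by (simp add: sum_distrib_left)
  have C: "- lam * ((\<Sum>k\<in>UNIV. ln (1 + inverse lam * s k)) - \<delta>) = lam * \<delta> - lam * (\<Sum>k\<in>UNIV. ln (1 + inverse lam * s k))"
    by (simp add: algebra_simps)
  show ?thesis using A B C ineq by linarith
qed


lemma lam_range:
  fixes S :: "real^'n^'n" and s :: "'n \<Rightarrow> real"
  assumes pdS: "pd S" and s: "\<forall>k. s k > 0"
    and sdet: "\<forall>c. det (matrix_inv S + c *\<^sub>R mat 1) * det S = prod (\<lambda>k. 1 + c * s k) UNIV"
    and dpos: "\<delta> > 0" and m0: "m0 < 0"
    and inC: "(lam, X) \<in> C_F S" and Fle: "Fdual S \<delta> lam X \<le> m0"
  shows "lam \<le> (\<Sum>k\<in>UNIV. s k) / \<delta>"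
    and "m0^2 / (4 * (real CARD('n))^2 * ((\<Sum>k\<in>UNIV. s k) + 1)) \<le> lam"
proof -
  define T where "T = (\<Sum>k\<in>UNIV. s k)"
  have lam: "lam > 0" using inC by (simp add: C_F_def)
  have T0: "T \<ge> 0" unfolding T_def using s by (simp add: sum_nonneg less_imp_le)
  have LB: "Fdual S \<delta> lam X \<ge> lam * \<delta> - (\<Sum>k\<in>UNIV. lam * ln (1 + inverse lam * s k))"
    by (rule F_lower[OF pdS inC s sdet])
  have G1: "(\<Sum>k\<in>UNIV. lam * ln (1 + inverse lam * s k)) \<le> T"
    unfolding T_def by (rule sum_mono) (use G_bounds(1)[OF lam] s in auto)
  have "lam * \<delta> < T" using LB G1 Fle m0 by linarith
  then show "lam \<le> (\<Sum>k\<in>UNIV. s k) / \<delta>" using dpos by (simp add: T_def[symmetric] pos_le_divide_eq)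
  have skT: "s k \<le> T" for k
    unfolding T_def by (rule member_le_sum) (use s in \<open>auto simp: less_imp_le\<close>)
  have perk: "lam * ln (1 + inverse lam * s k) \<le> 2 * sqrt (lam * T)" for k
  proof -
    have "lam * ln (1 + inverse lam * s k) \<le> 2 * sqrt (lam * s k)" using G_bounds(2)[OF lam] s by auto
    also have "sqrt (lam * s k) \<le> sqrt (lam * T)" using lam skT by (simp add: mult_left_mono)
    finally show "lam * ln (1 + inverse lam * s k) \<le> 2 * sqrt (lam * T)" by simp
  qed
  have "(\<Sum>k\<in>UNIV. lam * ln (1 + inverse lam * s k)) \<le> (\<Sum>k\<in>(UNIV::'n set). 2 * sqrt (lam * T))"
    by (intro sum_mono perk)
  also have "\<dots> = real CARD('n) * (2 * sqrt (lam * T))" by simp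
  finally have G2: "(\<Sum>k\<in>UNIV. lam * ln (1 + inverse lam * s k)) \<le> real CARD('n) * (2 * sqrt (lam * T))" .
  have "lam * \<delta> \<ge> 0" using lam dpos by simp
  then have "- m0 \<le> real CARD('n) * (2 * sqrt (lam * T))" using LB G2 Fle by linarith
  moreover have "0 \<le> - m0" using m0 by simp
  ultimately have "(- m0)^2 \<le> (real CARD('n) * (2 * sqrt (lam * T)))^2" by (rule power_mono)
  also have "\<dots> = 4 * (real CARD('n))^2 * (lam * T)"
    using lam T0 by (simp add: power_mult_distrib)
  also have "\<dots> \<le> 4 * (real CARD('n))^2 * (lam * (T + 1))"
    using lam by (intro mult_left_mono) auto
  finally have "m0^2 \<le> 4 * (real CARD('n))^2 * (T + 1) * lam" by (simp add: algebra_simps)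
  moreover have "4 * (real CARD('n))^2 * (T + 1) > 0" using T0 by simp
  ultimately show "m0^2 / (4 * (real CARD('n))^2 * ((\<Sum>k\<in>UNIV. s k) + 1)) \<le> lam"
    by (simp add: T_def[symmetric] divide_le_eq mult.commute)
qed

lemma psd_offdiag_bound:
  fixes M :: "real^'n^'n"
  assumes ps: "psd M"
  shows "2 * \<bar>M $ i $ j\<bar> \<le> M $ i $ i + M $ j $ j"
proof -
  have sym: "M $ j $ i = M $ i $ j" using psd_sym[OF ps] by (metis transpose_def vec_lambda_beta)
  define a where "a = axis i (1::real)"
  define b where "b = axis j (1::real)"
  have "0 \<le> (a + b) \<bullet> (M *v (a + b))" using ps by (simp add: psd_def)
  also have "\<dots> = a \<bullet> (M *v a) + a \<bullet> (M *v b) + b \<bullet> (M *v a) + b \<bullet> (M *v b)"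
    by (simp add: matrix_vector_right_distrib inner_add_left inner_add_right)
  also have "\<dots> = M $ i $ i + 2 * M $ i $ j + M $ j $ j" by (simp add: a_def b_def axis_quad sym)
  finally have 1: "0 \<le> M $ i $ i + 2 * M $ i $ j + M $ j $ j" .
  have "0 \<le> (a - b) \<bullet> (M *v (a - b))" using ps by (simp add: psd_def)
  also have "\<dots> = a \<bullet> (M *v a) - a \<bullet> (M *v b) - b \<bullet> (M *v a) + b \<bullet> (M *v b)"
    by (simp add: matrix_vector_mult_diff_distrib inner_diff_left inner_diff_right)
  also have "\<dots> = M $ i $ i - 2 * M $ i $ j + M $ j $ j" by (simp add: a_def b_def axis_quad sym)
  finally have 2: "0 \<le> M $ i $ i - 2 * M $ i $ j + M $ j $ j" .
  show ?thesis using 1 2 by linarith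
qed

lemma box_bound:
  fixes S :: "real^'n^'n"
  assumes pdS: "pd S" and inC: "(lam, X) \<in> C_F S" and lb: "lam \<le> b"
  shows "\<bar>X $ i $ j\<bar> \<le> 1 + b * (\<Sum>k\<in>UNIV. \<bar>matrix_inv S $ k $ k\<bar>)"
proof -
  let ?Si = "matrix_inv S"
  define cS where "cS = (\<Sum>k\<in>UNIV. \<bar>?Si $ k $ k\<bar>)"
  have lam: "lam > 0" and symX: "symm_mat X" and ps1: "psd (mat 1 - X)"
    and ps2: "psd (offdiag X - X)" and pdP: "pd (?Si + inverse lam *\<^sub>R X)"
    using inC by (auto simp: C_F_def)
  have b: "b > 0" using lam lb by simp
  have diag: "\<bar>X $ k $ k\<bar> \<le> b * cS" for k
  proof -
    have "0 \<le> (offdiag X - X) $ k $ k" by (rule psd_diag_entry[OF ps2])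
    then have up: "X $ k $ k \<le> 0" by (simp add: offdiag_entry)
    have "0 < (?Si + inverse lam *\<^sub>R X) $ k $ k" by (rule pd_diag_entry[OF pdP])
    then have "0 < ?Si $ k $ k + inverse lam * X $ k $ k" by simp
    then have "0 < lam * (?Si $ k $ k + inverse lam * X $ k $ k)" using lam by simp
    moreover have "lam * (?Si $ k $ k + inverse lam * X $ k $ k) = lam * ?Si $ k $ k + X $ k $ k"
      using lam by (simp add: algebra_simps)
    ultimately have lo: "- (lam * ?Si $ k $ k) < X $ k $ k" by linarith
    have Sk: "0 < ?Si $ k $ k" by (rule pd_diag_entry[OF inv_S_pd[OF pdS]])
    have "?Si $ k $ k \<le> cS" unfolding cS_def
      using member_le_sum[of k UNIV "\<lambda>k. \<bar>?Si $ k $ k\<bar>"] Sk by simp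
    then have cSk: "?Si $ k $ k \<le> cS" .
    have "lam * ?Si $ k $ k \<le> b * cS"
      by (rule mult_mono) (use lam lb Sk cSk in auto)
    then show ?thesis using up lo by linarith
  qed
  have cS0: "cS \<ge> 0" by (simp add: cS_def sum_nonneg)
  show ?thesis
  proof (cases "i = j")
    case True
    then show ?thesis using diag[of i] by (simp add: cS_def[symmetric])
  next
    case False
    have "2 * \<bar>(mat 1 - X) $ i $ j\<bar> \<le> (mat 1 - X) $ i $ i + (mat 1 - X) $ j $ j"
      by (rule psd_offdiag_bound[OF ps1])
    then have "2 * \<bar>X $ i $ j\<bar> \<le> 2 - X $ i $ i - X $ j $ j" using False by (simp add: mat_def)
    then show ?thesis using diag[of i] diag[of j] by (simp add: cS_def[symmetric])
  qed
qed


lemma symm_iff: "symm_mat X \<longleftrightarrow> (\<forall>i j. X $ i $ j = X $ j $ i)"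
  by (auto simp: symm_mat_def vec_eq_iff transpose_def)

lemma symm_add_scale: "symm_mat A \<Longrightarrow> symm_mat B \<Longrightarrow> symm_mat (A + c *\<^sub>R B)"
  by (simp add: symm_iff)

lemma offdiag_minus_diag: "offdiag X - X = diagm (\<lambda>i. - X $ i $ i)"
  by (simp add: vec_eq_iff offdiag_entry diagm_def)

lemma norm_mat_le: "norm (X::real^'n^'n) \<le> (\<Sum>i\<in>UNIV. \<Sum>j\<in>UNIV. \<bar>X $ i $ j\<bar>)"
proof -
  have "norm X \<le> (\<Sum>i\<in>UNIV. norm (X $ i))"
    unfolding norm_vec_def by (rule L2_set_le_sum) auto
  also have "\<dots> \<le> (\<Sum>i\<in>UNIV. \<Sum>j\<in>UNIV. \<bar>X $ i $ j\<bar>)"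
    by (rule sum_mono) (rule norm_le_l1_cart)
  finally show ?thesis .
qed

lemma continuous_on_transpose_entry[continuous_intros]:
  "continuous_on S f \<Longrightarrow> continuous_on S (\<lambda>z. (f z :: real^'n^'n) $ i $ j)"
  by (intro continuous_intros)

lemma exists_min:
  fixes S :: "real^'n^'n" and \<delta> :: real
  assumes pdS: "pd S" and dpos: "0 < \<delta>" and dlt: "\<delta> < delta_max S"
  shows "\<exists>lams Xs. (lams, Xs) \<in> C_F S \<and> (\<forall>(lam, X) \<in> C_F S. Fdual S \<delta> lams Xs \<le> Fdual S \<delta> lam X)
            \<and> Fdual S \<delta> lams Xs < 0"
proof -
  let ?Si = "matrix_inv S"
  define FF where "FF z = Fdual S \<delta> (fst z) (snd z)" for z :: "real \<times> (real^'n^'n)"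
  obtain lam0 X0 where w: "(lam0, X0) \<in> C_F S" and w0: "Fdual S \<delta> lam0 X0 < 0"
    using witness[OF pdS dlt] by blast
  define m0 where "m0 = Fdual S \<delta> lam0 X0"
  have m0: "m0 < 0" using w0 by (simp add: m0_def)
  obtain s :: "'n \<Rightarrow> real" where s: "\<forall>k. s k > 0"
    and sdet: "\<forall>c. det (?Si + c *\<^sub>R mat 1) * det S = prod (\<lambda>k. 1 + c * s k) UNIV"
    using spec_S[OF pdS] by blast
  define T where "T = (\<Sum>k\<in>UNIV. s k)"
  have T0: "T \<ge> 0" unfolding T_def using s by (simp add: sum_nonneg less_imp_le)
  define a where "a = m0^2 / (4 * (real CARD('n))^2 * (T + 1))"
  define b where "b = T / \<delta>"
  have a: "a > 0" unfolding a_def using m0 T0 by (intro divide_pos_pos) auto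
  define Bd where "Bd = 1 + b * (\<Sum>k\<in>UNIV. \<bar>?Si $ k $ k\<bar>)"
  define \<epsilon> where "\<epsilon> = exp (\<delta> - ln (det S))"
  have eps: "\<epsilon> > 0" by (simp add: \<epsilon>_def)
  have dS: "det S > 0" by (rule pd_det_pos[OF pdS])
  define Pm where "Pm z = ?Si + inverse (max a (fst z)) *\<^sub>R snd z" for z :: "real \<times> (real^'n^'n)"
  define K where "K = {z::real \<times> (real^'n^'n). a \<le> fst z \<and> fst z \<le> b
      \<and> (\<forall>i j. snd z $ i $ j = snd z $ j $ i) \<and> (\<forall>x. 0 \<le> x \<bullet> ((mat 1 - snd z) *v x))
      \<and> (\<forall>i. snd z $ i $ i \<le> 0) \<and> (\<forall>x. 0 \<le> x \<bullet> (Pm z *v x)) \<and> \<epsilon> \<le> det (Pm z)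
      \<and> (\<forall>i j. \<bar>snd z $ i $ j\<bar> \<le> Bd)}"
  have symSi: "symm_mat ?Si" using inv_S_sym[OF pdS] by (simp add: symm_mat_def)
  have inK: "(lam, X) \<in> K" if inC: "(lam, X) \<in> C_F S" and Fle: "Fdual S \<delta> lam X \<le> m0" for lam X
  proof -
    have r1: "lam \<le> b" unfolding b_def T_def by (rule lam_range(1)[OF pdS s sdet dpos m0 inC Fle])
    have r2: "a \<le> lam" unfolding a_def T_def by (rule lam_range(2)[OF pdS s sdet dpos m0 inC Fle])
    have lam: "lam > 0" and symX: "symm_mat X" and ps1: "psd (mat 1 - X)"
      and ps2: "psd (offdiag X - X)" and pdP: "pd (?Si + inverse lam *\<^sub>R X)"
      using inC by (auto simp: C_F_def)
    have Pm: "Pm (lam, X) = ?Si + inverse lam *\<^sub>R X" using r2 by (simp add: Pm_def max_def)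
    have dg: "X $ i $ i \<le> 0" for i
      using psd_diag_entry[OF ps2, of i] by (simp add: offdiag_entry)
    have dP: "det (?Si + inverse lam *\<^sub>R X) > 0" by (rule pd_det_pos[OF pdP])
    have "- lam * (ln (det (?Si + inverse lam *\<^sub>R X)) + ln (det S) - \<delta>) < 0"
      using Fle m0 by (simp add: Fdual_def)
    then have "ln (det (?Si + inverse lam *\<^sub>R X)) + ln (det S) - \<delta> > 0"
      using lam by (simp add: mult_less_0_iff zero_less_mult_iff)
    then have "\<delta> - ln (det S) < ln (det (?Si + inverse lam *\<^sub>R X))" by simp
    then have "\<epsilon> < det (?Si + inverse lam *\<^sub>R X)"
      unfolding \<epsilon>_def using dP by (metis exp_less_cancel_iff exp_ln)
    moreover have "0 \<le> x \<bullet> ((?Si + inverse lam *\<^sub>R X) *v x)" for x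
      using pdP by (cases "x = 0") (auto simp: pd_def less_imp_le)
    moreover have "\<bar>X $ i $ j\<bar> \<le> Bd" for i j
      unfolding Bd_def by (rule box_bound[OF pdS inC r1])
    ultimately show ?thesis
      unfolding K_def using r1 r2 symX ps1 dg Pm by (auto simp: symm_iff psd_def less_imp_le)
  qed
  have inC: "z \<in> C_F S" if zK: "z \<in> K" for z
  proof -
    obtain lam X where z: "z = (lam, X)" by (cases z)
    have lamA: "a \<le> lam" using zK by (simp add: K_def z)
    then have lam: "lam > 0" using a by simp
    have Pm: "Pm z = ?Si + inverse lam *\<^sub>R X" using lamA by (simp add: Pm_def max_def z)
    have symX: "symm_mat X" using zK by (simp add: K_def z symm_iff)
    have ps1: "psd (mat 1 - X)"
    proof -
      have "symm_mat (mat 1 - X)" using symX by (simp add: symm_iff mat_def)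
      then show ?thesis using zK by (simp add: K_def z psd_def)
    qed
    have ps2: "psd (offdiag X - X)"
      unfolding offdiag_minus_diag using zK by (intro psd_diagm) (simp add: K_def z)
    have psP: "psd (?Si + inverse lam *\<^sub>R X)"
    proof -
      have "symm_mat (?Si + inverse lam *\<^sub>R X)" by (rule symm_add_scale[OF symSi symX])
      then show ?thesis using zK Pm by (simp add: K_def z psd_def)
    qed
    have "det (?Si + inverse lam *\<^sub>R X) \<ge> \<epsilon>" using zK Pm by (simp add: K_def z)
    then have "det (?Si + inverse lam *\<^sub>R X) \<noteq> 0" using eps by linarith
    then have pdP: "pd (?Si + inverse lam *\<^sub>R X)" by (rule psd_det_pd[OF psP])
    show ?thesis unfolding z C_F_def using lam symX ps1 ps2 pdP by simp
  qed
  have contPm: "continuous_on UNIV Pm"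
    unfolding Pm_def using a by (intro continuous_intros) auto
  have closedK: "closed K"
    unfolding K_def
    by (intro closed_Collect_conj closed_Collect_all closed_Collect_le closed_Collect_eq
        continuous_intros contPm)
  have boundedK: "bounded K"
  proof -
    have "norm z \<le> b + real CARD('n) * real CARD('n) * Bd" if "z \<in> K" for z
    proof -
      have "norm z \<le> norm (fst z) + norm (snd z)" using norm_Pair_le[of "fst z" "snd z"] by simp
      also have "norm (fst z) \<le> b" using that a by (auto simp: K_def)
      also have "norm (snd z) \<le> (\<Sum>i\<in>UNIV. \<Sum>j\<in>UNIV. \<bar>snd z $ i $ j\<bar>)" by (rule norm_mat_le)
      also have "\<dots> \<le> (\<Sum>i\<in>(UNIV::'n set). \<Sum>j\<in>(UNIV::'n set). Bd)"
        using that by (intro sum_mono) (auto simp: K_def)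
      also have "\<dots> = real CARD('n) * real CARD('n) * Bd" by simp
      finally show ?thesis by simp
    qed
    then show ?thesis unfolding bounded_iff by blast
  qed
  have compK: "compact K" using closedK boundedK by (simp add: compact_eq_bounded_closed)
  have wK: "(lam0, X0) \<in> K" by (rule inK[OF w]) (simp add: m0_def)
  have contF: "continuous_on K FF"
  proof -
    have c1: "continuous_on K (\<lambda>z. - fst z * (ln (det (Pm z)) + ln (det S) - \<delta>))"
      using eps by (intro continuous_intros continuous_on_subset[OF contPm])
        (auto simp: K_def)
    have eq: "- fst z * (ln (det (Pm z)) + ln (det S) - \<delta>) = FF z" if "z \<in> K" for z
      using that a by (simp add: FF_def Fdual_def Pm_def K_def max_def)
    show ?thesis by (rule continuous_on_eq[OF c1 eq])
  qed
  obtain zs where zsK: "zs \<in> K" and zsmin: "\<And>y. y \<in> K \<Longrightarrow> FF zs \<le> FF y"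
    using continuous_attains_inf[OF compK _ contF] wK by blast
  have zsC: "zs \<in> C_F S" by (rule inC[OF zsK])
  have zsw: "FF zs \<le> m0" using zsmin[OF wK] by (simp add: FF_def m0_def)
  have allmin: "FF zs \<le> Fdual S \<delta> lam X" if "(lam, X) \<in> C_F S" for lam X
  proof (cases "Fdual S \<delta> lam X \<le> m0")
    case True
    then show ?thesis using zsmin[OF inK[OF that True]] by (simp add: FF_def)
  next
    case False
    then show ?thesis using zsw by simp
  qed
  show ?thesis
    by (rule exI[of _ "fst zs"], rule exI[of _ "snd zs"])
      (use zsC allmin zsw m0 in \<open>auto simp: FF_def\<close>)
qed


lemma unique_min:
  fixes S :: "real^'n^'n" and \<delta> :: real
  assumes pdS: "pd S"
    and z1: "(l1, X1) \<in> C_F S" and z2: "(l2, X2) \<in> C_F S"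
    and min1: "\<forall>(lam, X) \<in> C_F S. Fdual S \<delta> l1 X1 \<le> Fdual S \<delta> lam X"
    and min2: "\<forall>(lam, X) \<in> C_F S. Fdual S \<delta> l2 X2 \<le> Fdual S \<delta> lam X"
    and neg: "Fdual S \<delta> l1 X1 < 0"
  shows "l1 = l2 \<and> X1 = X2"
proof -
  let ?Si = "matrix_inv S"
  define P1 where "P1 = ?Si + inverse l1 *\<^sub>R X1"
  define P2 where "P2 = ?Si + inverse l2 *\<^sub>R X2"
  have l1: "l1 > 0" and sym1: "symm_mat X1" and ps11: "psd (mat 1 - X1)"
    and ps12: "psd (offdiag X1 - X1)" and pd1: "pd P1"
    using z1 by (auto simp: C_F_def P1_def)
  have l2: "l2 > 0" and sym2: "symm_mat X2" and ps21: "psd (mat 1 - X2)"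
    and ps22: "psd (offdiag X2 - X2)" and pd2: "pd P2"
    using z2 by (auto simp: C_F_def P2_def)
  define lm where "lm = (l1 + l2) / 2"
  define Xm where "Xm = (1/2) *\<^sub>R (X1 + X2)"
  define t where "t = l1 / (l1 + l2)"
  have lm: "lm > 0" using l1 l2 by (simp add: lm_def)
  have t: "0 < t" "t < 1" using l1 l2 by (auto simp: t_def field_simps)
  have Pm: "?Si + inverse lm *\<^sub>R Xm = t *\<^sub>R P1 + (1 - t) *\<^sub>R P2"
  proof -
    have "(?Si + inverse lm *\<^sub>R Xm) $ i $ j = (t *\<^sub>R P1 + (1 - t) *\<^sub>R P2) $ i $ j" for i j
    proof -
      have e1: "t * inverse l1 = inverse (l1 + l2)" using l1 l2 by (simp add: t_def field_simps)
      have e2: "(1 - t) * inverse l2 = inverse (l1 + l2)" using l1 l2 by (simp add: t_def field_simps)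
      have e3: "inverse lm * (1/2) = inverse (l1 + l2)" using l1 l2 by (simp add: lm_def field_simps)
      have "(t *\<^sub>R P1 + (1 - t) *\<^sub>R P2) $ i $ j
          = ?Si $ i $ j + (t * inverse l1) * X1 $ i $ j + ((1 - t) * inverse l2) * X2 $ i $ j"
        by (simp add: P1_def P2_def algebra_simps)
      also have "\<dots> = ?Si $ i $ j + (inverse lm * (1/2)) * (X1 $ i $ j + X2 $ i $ j)"
        by (simp only: e1 e2 e3) (simp add: algebra_simps)
      also have "\<dots> = (?Si + inverse lm *\<^sub>R Xm) $ i $ j" by (simp add: Xm_def)
      finally show ?thesis by simp
    qed
    then show ?thesis by (simp add: vec_eq_iff)
  qed
  have inCm: "(lm, Xm) \<in> C_F S"
  proof -
    have symm: "symm_mat Xm" using sym1 sym2 by (simp add: symm_iff Xm_def)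
    have "mat 1 - Xm = (1/2) *\<^sub>R (mat 1 - X1) + (1/2) *\<^sub>R (mat 1 - X2)"
      by (simp add: Xm_def vec_eq_iff algebra_simps)
    moreover have "psd ((1/2) *\<^sub>R (mat 1 - X1) + (1/2) *\<^sub>R (mat 1 - X2))"
      by (rule psd_comb[OF ps11 ps21]) auto
    ultimately have psm1: "psd (mat 1 - Xm)" by simp
    have "offdiag Xm - Xm = (1/2) *\<^sub>R (offdiag X1 - X1) + (1/2) *\<^sub>R (offdiag X2 - X2)"
      by (simp add: Xm_def vec_eq_iff offdiag_entry algebra_simps)
    moreover have "psd ((1/2) *\<^sub>R (offdiag X1 - X1) + (1/2) *\<^sub>R (offdiag X2 - X2))"
      by (rule psd_comb[OF ps12 ps22]) auto
    ultimately have psm2: "psd (offdiag Xm - Xm)" by simp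
    have "pd (?Si + inverse lm *\<^sub>R Xm)" unfolding Pm by (rule pd_comb[OF pd1 pd2 t])
    then show ?thesis using lm symm psm1 psm2 by (simp add: C_F_def)
  qed
  define c where "c = ln (det S) - \<delta>"
  have F1: "Fdual S \<delta> l1 X1 = - l1 * (ln (det P1) + c)" by (simp add: Fdual_def P1_def c_def)
  have F2: "Fdual S \<delta> l2 X2 = - l2 * (ln (det P2) + c)" by (simp add: Fdual_def P2_def c_def)
  have Fm: "Fdual S \<delta> lm Xm = - lm * (ln (det (t *\<^sub>R P1 + (1 - t) *\<^sub>R P2)) + c)"
    by (simp add: Fdual_def Pm c_def)
  have eq12: "Fdual S \<delta> l1 X1 = Fdual S \<delta> l2 X2"
    using min1 min2 z1 z2 by fastforce
  have m1: "Fdual S \<delta> l1 X1 \<le> Fdual S \<delta> lm Xm" using min1 inCm by fastforce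
  have lmt1: "lm * t = l1 / 2" using l1 l2 by (simp add: lm_def t_def field_simps)
  have lmt2: "lm * (1 - t) = l2 / 2" using l1 l2 by (simp add: lm_def t_def field_simps)
  have avg: "- lm * (t * ln (det P1) + (1 - t) * ln (det P2) + c)
            = (Fdual S \<delta> l1 X1 + Fdual S \<delta> l2 X2) / 2"
  proof -
    have "- lm * (t * ln (det P1) + (1 - t) * ln (det P2) + c)
        = - ((lm * t) * ln (det P1) + (lm * (1 - t)) * ln (det P2) + (lm * t + lm * (1 - t)) * c)"
      by (simp add: algebra_simps)
    also have "\<dots> = (Fdual S \<delta> l1 X1 + Fdual S \<delta> l2 X2) / 2"
      by (simp only: lmt1 lmt2 F1 F2) (simp add: field_simps)
    finally show ?thesis .
  qed
  have P12: "P1 = P2"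
  proof (rule ccontr)
    assume "P1 \<noteq> P2"
    then have "t * ln (det P1) + (1 - t) * ln (det P2) < ln (det (t *\<^sub>R P1 + (1 - t) *\<^sub>R P2))"
      by (rule logdet_concave(2)[OF pd1 pd2 t])
    then have "- lm * (ln (det (t *\<^sub>R P1 + (1 - t) *\<^sub>R P2)) + c)
             < - lm * (t * ln (det P1) + (1 - t) * ln (det P2) + c)"
      using lm by simp
    then have "Fdual S \<delta> lm Xm < Fdual S \<delta> l1 X1" using Fm avg eq12 by simp
    then show False using m1 by simp
  qed
  have Lc: "ln (det P1) + c \<noteq> 0" using neg F1 by auto
  have "l1 * (ln (det P1) + c) = l2 * (ln (det P1) + c)" using eq12 F1 F2 P12 by simp
  then have ll: "l1 = l2" using Lc by simp
  have "inverse l1 *\<^sub>R X1 = inverse l1 *\<^sub>R X2" using P12 ll by (simp add: P1_def P2_def)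
  then have "X1 = X2" using l1 by simp
  then show ?thesis using ll by simp
qed


lemma C0_to_CF:
  fixes S :: "real^'n^'n"
  assumes "(lam, \<Gamma>, \<Theta>) \<in> C_0 S"
  shows "(lam, offdiag \<Theta> - \<Gamma>) \<in> C_F S"
    and "Jtilde S \<delta> lam \<Gamma> \<Theta> = Fdual S \<delta> lam (offdiag \<Theta> - \<Gamma>)"
proof -
  have lam: "lam > 0" and sG: "symm_mat \<Gamma>" and sT: "symm_mat \<Theta>"
    and p1: "psd (mat 1 + \<Gamma> - offdiag \<Theta>)" and pG: "psd \<Gamma>"
    and pP: "pd (matrix_inv S + inverse lam *\<^sub>R (offdiag \<Theta> - \<Gamma>))"
    using assms by (auto simp: C_0_def)
  have symX: "symm_mat (offdiag \<Theta> - \<Gamma>)"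
    using sG sT by (simp add: symm_iff offdiag_entry)
  have eqm: "mat 1 - (offdiag \<Theta> - \<Gamma>) = mat 1 + \<Gamma> - offdiag \<Theta>" by (simp add: algebra_simps)
  have q1: "psd (mat 1 - (offdiag \<Theta> - \<Gamma>))" unfolding eqm by (rule p1)
  have "offdiag (offdiag \<Theta> - \<Gamma>) - (offdiag \<Theta> - \<Gamma>) = diagm (\<lambda>i. \<Gamma> $ i $ i)"
    by (simp add: vec_eq_iff offdiag_entry diagm_def)
  moreover have "psd (diagm (\<lambda>i. \<Gamma> $ i $ i))" by (rule psd_diagm) (rule psd_diag_entry[OF pG])
  ultimately have q2: "psd (offdiag (offdiag \<Theta> - \<Gamma>) - (offdiag \<Theta> - \<Gamma>))" by simp
  show "(lam, offdiag \<Theta> - \<Gamma>) \<in> C_F S" using lam symX q1 q2 pP by (simp add: C_F_def)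
  show "Jtilde S \<delta> lam \<Gamma> \<Theta> = Fdual S \<delta> lam (offdiag \<Theta> - \<Gamma>)"
    by (simp add: Jtilde_def Fdual_def algebra_simps)
qed

lemma CF_to_C0:
  fixes S :: "real^'n^'n"
  assumes "(lam, X) \<in> C_F S"
  shows "(lam, offdiag X - X, X) \<in> C_0 S"
    and "Jtilde S \<delta> lam (offdiag X - X) X = Fdual S \<delta> lam X"
proof -
  have lam: "lam > 0" and sX: "symm_mat X" and p1: "psd (mat 1 - X)"
    and p2: "psd (offdiag X - X)" and pP: "pd (matrix_inv S + inverse lam *\<^sub>R X)"
    using assms by (auto simp: C_F_def)
  have sG: "symm_mat (offdiag X - X)" using sX by (simp add: symm_iff offdiag_entry)
  have e1: "mat 1 + (offdiag X - X) - offdiag X = mat 1 - X" by (simp add: algebra_simps)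
  have e2: "offdiag X - (offdiag X - X) = X" by simp
  show "(lam, offdiag X - X, X) \<in> C_0 S"
    using lam sG sX p1 p2 pP by (simp add: C_0_def e1 e2)
  show "Jtilde S \<delta> lam (offdiag X - X) X = Fdual S \<delta> lam X"
    by (simp add: Jtilde_def Fdual_def algebra_simps)
qed

theorem theorem2:
  fixes S :: "real^'n^'n" and \<delta> :: real
  assumes "symm_mat S" and "pd S"
    and "0 < \<delta>" and "\<delta> < delta_max S"
  shows "\<exists>lams Xs. (lams, Xs) \<in> C_F S
           \<and> (\<forall>(lam, X) \<in> C_F S. Fdual S \<delta> lams Xs \<le> Fdual S \<delta> lam X)
           \<and> (\<forall>(lam, X) \<in> C_F S. (\<forall>(lam', X') \<in> C_F S. Fdual S \<delta> lam X \<le> Fdual S \<delta> lam' X')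
                 \<longrightarrow> lam = lams \<and> X = Xs)
           \<and> (\<forall>(lam, \<Gamma>, \<Theta>) \<in> C_0 S.
                 (\<forall>(lam', \<Gamma>', \<Theta>') \<in> C_0 S. Jtilde S \<delta> lam \<Gamma> \<Theta> \<le> Jtilde S \<delta> lam' \<Gamma>' \<Theta>')
                 \<longrightarrow> lam = lams \<and> offdiag \<Theta> - \<Gamma> = Xs)"
proof -
  obtain lams Xs where zs: "(lams, Xs) \<in> C_F S"
    and mins: "\<forall>(lam, X) \<in> C_F S. Fdual S \<delta> lams Xs \<le> Fdual S \<delta> lam X"
    and neg: "Fdual S \<delta> lams Xs < 0"
    using exists_min[OF assms(2,3,4)] by blast
  have uniq: "lam = lams \<and> X = Xs"
    if inC: "(lam, X) \<in> C_F S" and minX: "\<forall>(lam', X') \<in> C_F S. Fdual S \<delta> lam X \<le> Fdual S \<delta> lam' X'"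
    for lam X
    using unique_min[OF assms(2) zs inC mins minX neg] by simp
  have partJ: "lam = lams \<and> offdiag \<Theta> - \<Gamma> = Xs"
    if inC0: "(lam, \<Gamma>, \<Theta>) \<in> C_0 S"
      and minJ: "\<forall>(lam', \<Gamma>', \<Theta>') \<in> C_0 S. Jtilde S \<delta> lam \<Gamma> \<Theta> \<le> Jtilde S \<delta> lam' \<Gamma>' \<Theta>'"
    for lam \<Gamma> \<Theta>
  proof (rule uniq)
    show "(lam, offdiag \<Theta> - \<Gamma>) \<in> C_F S" by (rule C0_to_CF(1)[OF inC0])
    show "\<forall>(lam', X') \<in> C_F S. Fdual S \<delta> lam (offdiag \<Theta> - \<Gamma>) \<le> Fdual S \<delta> lam' X'"
    proof (clarify)
      fix lam' X' assume inC': "(lam', X') \<in> C_F S"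
      have "Jtilde S \<delta> lam \<Gamma> \<Theta> \<le> Jtilde S \<delta> lam' (offdiag X' - X') X'"
        using minJ CF_to_C0(1)[OF inC'] by fastforce
      then show "Fdual S \<delta> lam (offdiag \<Theta> - \<Gamma>) \<le> Fdual S \<delta> lam' X'"
        by (simp add: C0_to_CF(2)[OF inC0] CF_to_C0(2)[OF inC'])
    qed
  qed
  show ?thesis
    by (rule exI[of _ lams], rule exI[of _ Xs]) (use zs mins uniq partJ in blast)
qed


end
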